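(* Let $E$ and $F$ be weighted geometric mean closed Archimedean vector lattices over $\mathbb{K}$, let $n\in\mathbb{N}$, and let $r_1,\dots,r_n\in(0,1)$ with $\sum_{k=1}^n r_k=1$. (1) For every positive linear map $T\colon E\to F$ and all $f_1,\dots,f_n\in E$: $T\bigl(\triangle_{k=1}^n(f_k,r_k)\bigr)\le\triangle_{k=1}^n\bigl(T(|f_k|),r_k\bigr)$. (2) A linear map $T\colon E\to F$ is a vector lattice homomorphism if and only if $T\bigl(\triangle_{k=1}^n(f_k,r_k)\bigr)=\triangle_{k=1}^n\bigl(T(f_k),r_k\bigr)$ for all $f_1,\dots,f_n\in E$. (3) If $G$ is a (not necessarily weighted geometric mean closed) vector sublattice of $E$, $T\colon G\to F$ is a vector lattice homomorphism, and $f_1,\dots,f_n\in G$ with $\triangle_{k=1}^n(f_k,r_k)\in G$, then $T\bigl(\triangle_{k=1}^n(f_k,r_k)\bigr)=\triangle_{k=1}^n\bigl(T(f_k),r_k\bigr)$.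
   Context: $\mathbb{K}$ denotes $\mathbb{R}$ or $\mathbb{C}$. An Archimedean real vector lattice $E$ is square mean closed if $\sup\{(\cos\theta)f+(\sin\theta)g:\theta\in[0,2\pi]\}$ exists in $E$ for all $f,g\in E$. An Archimedean vector lattice over $\mathbb{C}$ is a complex vector space $E+iE$ (complexification) where $E$ is a square mean closed Archimedean real vector lattice; its modulus is $|f+ig|=\sup\{(\cos\theta)f+(\sin\theta)g:\theta\in[0,2\pi]\}$. An Archimedean vector lattice over $\mathbb{R}$ is an Archimedean real vector lattice with $|f|=f\vee(-f)$. For such $E$: $E^{+}=\{f\in E:|f|=f\}$, $E_\rho=\{f-g:f,g\in E^+\}$, ordered as a real vector lattice; infima are in $E_\rho$. $E$ is weighted geometric mean closed if for every $n$, all $f_1,\dots,f_n\in E$ and all $r_1,\dots,r_n\in(0,1)$ with $\sum r_k=1$, the infimum $\triangle_{k=1}^n(f_k,r_k):=\inf\{\sum_{k=1}^n r_k\theta_k|f_k|:\theta_k\in(0,\infty),\ \prod_{k=1}^n\theta_k^{r_k}=1\}$ exists in $E$. A linear map $T$ is positive if $T(E^+)\subseteq F^+$; it is a vector lattice homomorphism if $|T(f)|=T(|f|)$ for all $f$. A vector sublattice of $E$ is a $\mathbb{K}$-linear subspace closed under the modulus. *)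

theory Defs
  imports Complex_Main "HOL-Library.Product_Plus"
begin

class real_vector_lattice = ordered_real_vector + lattice

class archimedean_real_vector_lattice = real_vector_lattice +
  assumes archimedean: "0 \<le> x \<Longrightarrow> (\<And>n::nat. real n *\<^sub>R x \<le> y) \<Longrightarrow> x = 0"

definition is_inf :: "'a::order set \<Rightarrow> 'a \<Rightarrow> bool" where
  "is_inf S x \<longleftrightarrow> (\<forall>s\<in>S. x \<le> s) \<and> (\<forall>y. (\<forall>s\<in>S. y \<le> s) \<longrightarrow> y \<le> x)"

definition is_sup :: "'a::order set \<Rightarrow> 'a \<Rightarrow> bool" where
  "is_sup S x \<longleftrightarrow> (\<forall>s\<in>S. s \<le> x) \<and> (\<forall>y. (\<forall>s\<in>S. s \<le> y) \<longrightarrow> x \<le> y)"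

definition vabs :: "'a::real_vector_lattice \<Rightarrow> 'a" where
  "vabs f = sup f (- f)"

definition pos_R :: "'a::real_vector_lattice \<Rightarrow> bool" where
  "pos_R f \<longleftrightarrow> vabs f = f"

definition wgm_set_R :: "(nat \<Rightarrow> 'a::real_vector_lattice) \<Rightarrow> (nat \<Rightarrow> real) \<Rightarrow> nat \<Rightarrow> 'a set" where
  "wgm_set_R f r n = {(\<Sum>k\<in>{1..n}. (r k * \<theta> k) *\<^sub>R vabs (f k)) | \<theta>.
      (\<forall>k\<in>{1..n}. 0 < \<theta> k) \<and> (\<Prod>k\<in>{1..n}. \<theta> k powr r k) = 1}"

definition wgm_R :: "(nat \<Rightarrow> 'a::real_vector_lattice) \<Rightarrow> (nat \<Rightarrow> real) \<Rightarrow> nat \<Rightarrow> 'a" where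
  "wgm_R f r n = (THE x. is_inf (wgm_set_R f r n) x)"

definition wgm_closed_R :: "'a::archimedean_real_vector_lattice itself \<Rightarrow> bool" where
  "wgm_closed_R _ \<longleftrightarrow> (\<forall>n (f::nat \<Rightarrow> 'a) r.
      (\<forall>k\<in>{1..n}. 0 < r k \<and> r k < 1) \<and> (\<Sum>k\<in>{1..n}. r k) = 1
        \<longrightarrow> (\<exists>x. is_inf (wgm_set_R f r n) x))"

definition positive_map_R :: "('a::real_vector_lattice \<Rightarrow> 'b::real_vector_lattice) \<Rightarrow> bool" where
  "positive_map_R T \<longleftrightarrow> (\<forall>f. pos_R f \<longrightarrow> pos_R (T f))"

definition vl_hom_on_R :: "'a::real_vector_lattice set \<Rightarrow> ('a \<Rightarrow> 'b::real_vector_lattice) \<Rightarrow> bool" where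
  "vl_hom_on_R G T \<longleftrightarrow> (\<forall>f\<in>G. vabs (T f) = T (vabs f))"

definition sublattice_R :: "'a::real_vector_lattice set \<Rightarrow> bool" where
  "sublattice_R G \<longleftrightarrow> 0 \<in> G \<and> (\<forall>x\<in>G. \<forall>y\<in>G. x + y \<in> G) \<and> (\<forall>c x. x \<in> G \<longrightarrow> c *\<^sub>R x \<in> G)
      \<and> (\<forall>x\<in>G. vabs x \<in> G)"

definition linear_on_R :: "'a::real_vector set \<Rightarrow> ('a \<Rightarrow> 'b::real_vector) \<Rightarrow> bool" where
  "linear_on_R G T \<longleftrightarrow> (\<forall>x\<in>G. \<forall>y\<in>G. T (x + y) = T x + T y) \<and> (\<forall>c. \<forall>x\<in>G. T (c *\<^sub>R x) = c *\<^sub>R T x)"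

section \<open>Case K = C: the complexification E + iE, represented as pairs (f, g) = f + i g\<close>

definition square_mean_closed :: "'a::real_vector_lattice itself \<Rightarrow> bool" where
  "square_mean_closed _ \<longleftrightarrow> (\<forall>f g::'a. \<exists>s. is_sup {cos \<theta> *\<^sub>R f + sin \<theta> *\<^sub>R g | \<theta>. \<theta> \<in> {0..2*pi}} s)"

text \<open>Real-valued modulus |f + i g| (an element of E).\<close>
definition cabs_re :: "'a::real_vector_lattice \<times> 'a \<Rightarrow> 'a" where
  "cabs_re z = (THE s. is_sup {cos \<theta> *\<^sub>R fst z + sin \<theta> *\<^sub>R snd z | \<theta>. \<theta> \<in> {0..2*pi}} s)"

definition cvabs :: "'a::real_vector_lattice \<times> 'a \<Rightarrow> 'a \<times> 'a" where
  "cvabs z = (cabs_re z, 0)"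

definition cscale :: "complex \<Rightarrow> 'a::real_vector \<times> 'a \<Rightarrow> 'a \<times> 'a" where
  "cscale c z = (Re c *\<^sub>R fst z - Im c *\<^sub>R snd z, Re c *\<^sub>R snd z + Im c *\<^sub>R fst z)"

definition pos_C :: "'a::real_vector_lattice \<times> 'a \<Rightarrow> bool" where
  "pos_C z \<longleftrightarrow> cvabs z = z"

text \<open>Order of E_rho, written on E + iE: z <= w iff w - z is in E+.\<close>
definition le_C :: "'a::real_vector_lattice \<times> 'a \<Rightarrow> 'a \<times> 'a \<Rightarrow> bool" where
  "le_C z w \<longleftrightarrow> pos_C (w - z)"

definition wgm_set_C :: "(nat \<Rightarrow> 'a::real_vector_lattice \<times> 'a) \<Rightarrow> (nat \<Rightarrow> real) \<Rightarrow> nat \<Rightarrow> 'a set" where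
  "wgm_set_C f r n = {(\<Sum>k\<in>{1..n}. (r k * \<theta> k) *\<^sub>R cabs_re (f k)) | \<theta>.
      (\<forall>k\<in>{1..n}. 0 < \<theta> k) \<and> (\<Prod>k\<in>{1..n}. \<theta> k powr r k) = 1}"

definition wgm_C :: "(nat \<Rightarrow> 'a::real_vector_lattice \<times> 'a) \<Rightarrow> (nat \<Rightarrow> real) \<Rightarrow> nat \<Rightarrow> 'a \<times> 'a" where
  "wgm_C f r n = ((THE x. is_inf (wgm_set_C f r n) x), 0)"

definition wgm_closed_C :: "'a::archimedean_real_vector_lattice itself \<Rightarrow> bool" where
  "wgm_closed_C _ \<longleftrightarrow> (\<forall>n (f::nat \<Rightarrow> 'a \<times> 'a) r.
      (\<forall>k\<in>{1..n}. 0 < r k \<and> r k < 1) \<and> (\<Sum>k\<in>{1..n}. r k) = 1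
        \<longrightarrow> (\<exists>x. is_inf (wgm_set_C f r n) x))"

definition clinear_on :: "('a::real_vector \<times> 'a) set \<Rightarrow> ('a \<times> 'a \<Rightarrow> 'b::real_vector \<times> 'b) \<Rightarrow> bool" where
  "clinear_on G T \<longleftrightarrow> (\<forall>x\<in>G. \<forall>y\<in>G. T (x + y) = T x + T y) \<and> (\<forall>c. \<forall>x\<in>G. T (cscale c x) = cscale c (T x))"

definition positive_map_C :: "('a::real_vector_lattice \<times> 'a \<Rightarrow> 'b::real_vector_lattice \<times> 'b) \<Rightarrow> bool" where
  "positive_map_C T \<longleftrightarrow> (\<forall>z. pos_C z \<longrightarrow> pos_C (T z))"

definition vl_hom_on_C :: "('a::real_vector_lattice \<times> 'a) set \<Rightarrow> ('a \<times> 'a \<Rightarrow> 'b::real_vector_lattice \<times> 'b) \<Rightarrow> bool" where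
  "vl_hom_on_C G T \<longleftrightarrow> (\<forall>z\<in>G. cvabs (T z) = T (cvabs z))"

definition sublattice_C :: "('a::real_vector_lattice \<times> 'a) set \<Rightarrow> bool" where
  "sublattice_C G \<longleftrightarrow> 0 \<in> G \<and> (\<forall>x\<in>G. \<forall>y\<in>G. x + y \<in> G) \<and> (\<forall>c x. x \<in> G \<longrightarrow> cscale c x \<in> G)
      \<and> (\<forall>x\<in>G. cvabs x \<in> G)"

end

theory Submission
  imports Defs "HOL-Library.Lattice_Algebras" "HOL-Library.FuncSet"
begin


subclass (in real_vector_lattice) lattice_ab_group_add ..


lemma two_nonneg_imp: "(0::'a::real_vector_lattice) \<le> x + x \<Longrightarrow> 0 \<le> x"
by simp

lemma pos_R_iff: "pos_R (x::'a::real_vector_lattice) \<longleftrightarrow> 0 \<le> x"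
proof -
  have "pos_R x \<longleftrightarrow> - x \<le> x" unfolding pos_R_def vabs_def by (simp add: le_iff_sup sup.commute)
  also have "\<dots> \<longleftrightarrow> 0 \<le> x"
  proof
    assume "-x \<le> x" hence "0 \<le> x + x" by (metis add.commute add_le_cancel_left add_right_mono le_add_diff_inverse2 diff_self neg_le_iff_le  add.right_inverse add_mono order_refl)
    thus "0 \<le> x" by (rule two_nonneg_imp)
  qed (meson neg_le_0_iff_le order_trans)
  finally show ?thesis .
qed

lemma vabs_ge: "(x::'a::real_vector_lattice) \<le> vabs x" "- x \<le> vabs x" unfolding vabs_def by simp_all

lemma vabs_nonneg: "0 \<le> vabs (x::'a::real_vector_lattice)"
proof -
  have "x + - x \<le> vabs x + vabs x" by (intro add_mono vabs_ge)
  thus ?thesis by (simp add: two_nonneg_imp)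
qed

lemma vabs_of_nonneg: "0 \<le> (x::'a::real_vector_lattice) \<Longrightarrow> vabs x = x"
  using pos_R_iff pos_R_def by metis

lemma scaleR_sup: "0 < c \<Longrightarrow> c *\<^sub>R sup a (b::'a::real_vector_lattice) = sup (c *\<^sub>R a) (c *\<^sub>R b)"
proof (rule order.antisym)
  assume c: "0 < c"
  show "sup (c *\<^sub>R a) (c *\<^sub>R b) \<le> c *\<^sub>R sup a b"
    using c by (simp add: scaleR_left_mono)
  have "a \<le> (1/c) *\<^sub>R sup (c *\<^sub>R a) (c *\<^sub>R b)"
  proof -
    have "(1/c) *\<^sub>R (c *\<^sub>R a) \<le> (1/c) *\<^sub>R sup (c *\<^sub>R a) (c *\<^sub>R b)"
      using c by (intro scaleR_left_mono) auto
    thus ?thesis using c by (simp add: scaleR_scaleR)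
  qed
  moreover have "b \<le> (1/c) *\<^sub>R sup (c *\<^sub>R a) (c *\<^sub>R b)"
  proof -
    have "(1/c) *\<^sub>R (c *\<^sub>R b) \<le> (1/c) *\<^sub>R sup (c *\<^sub>R a) (c *\<^sub>R b)"
      using c by (intro scaleR_left_mono) auto
    thus ?thesis using c by (simp add: scaleR_scaleR)
  qed
  ultimately have "sup a b \<le> (1/c) *\<^sub>R sup (c *\<^sub>R a) (c *\<^sub>R b)" by simp
  hence "c *\<^sub>R sup a b \<le> c *\<^sub>R ((1/c) *\<^sub>R sup (c *\<^sub>R a) (c *\<^sub>R b))"
    using c by (intro scaleR_left_mono) auto
  thus "c *\<^sub>R sup a b \<le> sup (c *\<^sub>R a) (c *\<^sub>R b)" using c by (simp add: scaleR_scaleR)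
qed

lemma sup0_eq: "sup (x::'a::real_vector_lattice) 0 = (1/2::real) *\<^sub>R (vabs x + x)"
proof -
  have "vabs x + x = sup (x + x) 0" unfolding vabs_def by (simp add: add_sup_distrib_right add.left_inverse)
  also have "x + x = (2::real) *\<^sub>R x" by (simp add: scaleR_2)
  also have "sup ((2::real) *\<^sub>R x) 0 = (2::real) *\<^sub>R sup x 0"
    using scaleR_sup[of 2 x 0] by simp
  finally show ?thesis by simp
qed

lemma inf_eq: "inf (x::'a::real_vector_lattice) y = x - sup (x - y) 0"
proof -
  have "x - sup (x - y) 0 = x + inf (y - x) 0" by (simp add: diff_sup_eq_inf)
  also have "\<dots> = inf (x + (y - x)) (x + 0)" by (rule add_inf_distrib_left)
  finally show ?thesis by (simp add: inf_commute)
qed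

lemma decomp: "(x::'a::real_vector_lattice) = sup x 0 - sup (- x) 0"
proof -
  have "sup (- x) 0 + x = sup 0 x" by (simp add: add_sup_distrib_right)
  thus ?thesis by (metis add_diff_cancel diff_add_cancel sup_commute add.commute)
qed

lemma scale_le_vabs: "\<bar>c\<bar> \<le> 1 \<Longrightarrow> c *\<^sub>R (x::'a::real_vector_lattice) \<le> vabs x"
proof (cases "0 \<le> c")
  case True
  assume "\<bar>c\<bar> \<le> 1"
  hence "c *\<^sub>R x \<le> c *\<^sub>R vabs x" using True vabs_ge by (intro scaleR_left_mono) auto
  also have "\<dots> \<le> 1 *\<^sub>R vabs x" using True \<open>\<bar>c\<bar> \<le> 1\<close> vabs_nonneg by (intro scaleR_right_mono) auto
  finally show ?thesis by simp
next
  case False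
  assume "\<bar>c\<bar> \<le> 1"
  have "c *\<^sub>R x = (-c) *\<^sub>R (-x)" by simp
  also have "\<dots> \<le> (-c) *\<^sub>R vabs x" using False vabs_ge by (intro scaleR_left_mono) auto
  also have "\<dots> \<le> 1 *\<^sub>R vabs x" using False \<open>\<bar>c\<bar> \<le> 1\<close> vabs_nonneg by (intro scaleR_right_mono) auto
  finally show ?thesis by simp
qed




definition adm :: "(nat \<Rightarrow> real) \<Rightarrow> nat \<Rightarrow> (nat \<Rightarrow> real) set" where
  "adm r n = {\<theta>. (\<forall>k\<in>{1..n}. 0 < \<theta> k) \<and> (\<Prod>k\<in>{1..n}. \<theta> k powr r k) = 1}"

lemma prod_powr_mono:
  assumes "\<forall>k\<in>{1..n}. 0 < x k \<and> x k \<le> y k" "\<forall>k\<in>{1..n}. 0 \<le> (r k::real)"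
  shows "(\<Prod>k\<in>{1..n}. x k powr r k) \<le> (\<Prod>k\<in>{1..n}. y k powr r k)"
  using assms by (intro prod_mono) (auto intro!: powr_mono2 simp: less_imp_le)

lemma normalize_adm:
  assumes r_sum: "(\<Sum>k\<in>{1..n}. r k) = 1" and q: "\<forall>k\<in>{1..n}. 0 < q k"
  shows "(\<lambda>k. q k / (\<Prod>j\<in>{1..n}. q j powr r j)) \<in> adm r n"
proof -
  define P where "P = (\<Prod>j\<in>{1..n}. q j powr r j)"
  have P: "0 < P" unfolding P_def using q by (intro prod_pos) force
  have "(\<Prod>k\<in>{1..n}. (q k / P) powr r k) = (\<Prod>k\<in>{1..n}. q k powr r k / P powr r k)"
    using P q by (intro prod.cong) (auto simp: powr_divide)
  also have "\<dots> = P / (\<Prod>k\<in>{1..n}. P powr r k)" by (simp add: prod_dividef P_def)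
  also have "(\<Prod>k\<in>{1..n}. P powr r k) = P powr (\<Sum>k\<in>{1..n}. r k)"
    using P by (simp add: powr_sum)
  also have "\<dots> = P" using r_sum P by simp
  finally show ?thesis using P q unfolding adm_def P_def by auto
qed

lemma domination:
  fixes n :: nat and r :: "nat \<Rightarrow> real" and c :: real
  assumes r_range: "\<forall>k\<in>{1..n}. 0 < r k \<and> r k < 1"
    and r_sum: "(\<Sum>k\<in>{1..n}. r k) = 1" and c: "0 < c" "c \<le> 1"
  shows "\<exists>\<Theta>. finite \<Theta> \<and> \<Theta> \<subseteq> adm r n \<and> (\<forall>\<phi>\<in>adm r n. \<exists>\<theta>\<in>\<Theta>. \<forall>k\<in>{1..n}. \<theta> k \<le> \<phi> k + c)"
proof -
  define M where "M = (\<Sum>k\<in>{1..n}. (1/c) powr (1 / r k))"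
  define N where "N = nat \<lceil>M / c\<rceil> + 1"
  define grid where "grid = (\<lambda>j. c * real j) ` {1..N}"
  define Q where "Q = PiE {1..n} (\<lambda>_. grid)"
  define nrm where "nrm = (\<lambda>q::nat\<Rightarrow>real. \<lambda>k. q k / (\<Prod>j\<in>{1..n}. q j powr r j))"
  have ne: "{1..n} \<noteq> {}" using r_sum by (cases n) auto
  have Mpos: "0 < M" unfolding M_def using ne c by (intro sum_pos) auto
  have gridpos: "\<forall>x\<in>grid. 0 < x" unfolding grid_def using c by auto
  have fin: "finite (nrm ` Q)" unfolding Q_def grid_def by (intro finite_imageI finite_PiE) auto
  have sub: "nrm ` Q \<subseteq> adm r n"
  proof
    fix t assume "t \<in> nrm ` Q"
    then obtain q where q: "q \<in> Q" "t = nrm q" by auto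
    have "\<forall>k\<in>{1..n}. 0 < q k" using q(1) gridpos unfolding Q_def by (auto simp: PiE_def Pi_def)
    thus "t \<in> adm r n" using q(2) normalize_adm[OF r_sum] unfolding nrm_def by blast
  qed
  have dom: "\<exists>\<theta>\<in>nrm ` Q. \<forall>k\<in>{1..n}. \<theta> k \<le> \<phi> k + c" if phi: "\<phi> \<in> adm r n" for \<phi>
  proof -
    have phipos: "\<forall>k\<in>{1..n}. 0 < \<phi> k" and phiP: "(\<Prod>k\<in>{1..n}. \<phi> k powr r k) = 1"
      using phi unfolding adm_def by auto
    define j where "j = (\<lambda>k. nat \<lceil>min (\<phi> k) M / c\<rceil>)"
    define q where "q = restrict (\<lambda>k. c * real (j k)) {1..n}"
    have jb: "1 \<le> j k \<and> j k \<le> N" if "k \<in> {1..n}" for k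
    proof -
      have "0 < min (\<phi> k) M / c" using phipos that Mpos c by auto
      hence "1 \<le> j k" unfolding j_def by linarith
      moreover have "min (\<phi> k) M / c \<le> M / c" using c by (intro divide_right_mono) auto
      hence "nat \<lceil>min (\<phi> k) M / c\<rceil> \<le> nat \<lceil>M / c\<rceil>" by (intro nat_mono ceiling_mono)
      hence "j k \<le> N" unfolding j_def N_def by simp
      ultimately show ?thesis by simp
    qed
    have qk: "q k = c * real (j k)" if "k \<in> {1..n}" for k using that q_def by simp
    have qlo: "min (\<phi> k) M \<le> q k" and qhi: "q k \<le> \<phi> k + c" and qc: "c \<le> q k"
      if "k \<in> {1..n}" for k
    proof -
      have "min (\<phi> k) M / c \<le> real (j k)" unfolding j_def by linarith
      thus "min (\<phi> k) M \<le> q k" using c qk[OF that] by (simp add: field_simps)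
      have ypos: "0 < min (\<phi> k) M / c" using phipos that Mpos c by auto
      have "real (j k) = of_int \<lceil>min (\<phi> k) M / c\<rceil>" unfolding j_def using ypos by simp
      also have "\<dots> < min (\<phi> k) M / c + 1" by linarith
      finally have "real (j k) < min (\<phi> k) M / c + 1" .
      hence "q k < min (\<phi> k) M + c" using c qk[OF that] by (simp add: field_simps)
      thus "q k \<le> \<phi> k + c" by linarith
      show "c \<le> q k" using jb[OF that] qk[OF that] c by simp
    qed
    have qQ: "q \<in> Q" unfolding Q_def grid_def q_def using jb by auto
    have qpos: "\<forall>k\<in>{1..n}. 0 < q k" using qc c by (meson less_le_trans)
    define P where "P = (\<Prod>k\<in>{1..n}. q k powr r k)"
    have P1: "1 \<le> P"
    proof (cases "\<forall>k\<in>{1..n}. \<phi> k \<le> M")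
      case True
      have "1 = (\<Prod>k\<in>{1..n}. \<phi> k powr r k)" using phiP by simp
      also have "\<dots> \<le> P" unfolding P_def using True qlo phipos r_range
        by (intro prod_powr_mono) (auto simp: min_def split: if_splits)
      finally show ?thesis .
    next
      case False
      then obtain i where i: "i \<in> {1..n}" "M < \<phi> i" by auto
      have ri: "0 < r i" "r i < 1" using r_range i(1) by blast+
      have qi: "M \<le> q i" using qlo[OF i(1)] i by simp
      have fin1: "finite ({1..n} - {i})" by simp
      have "P = q i powr r i * (\<Prod>k\<in>{1..n}-{i}. q k powr r k)"
        unfolding P_def using i by (simp add: prod.remove)
      also have "\<dots> \<ge> M powr r i * (\<Prod>k\<in>{1..n}-{i}. c powr r k)"
      proof (rule mult_mono)
        show "M powr r i \<le> q i powr r i" using qi Mpos ri by (intro powr_mono2) auto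
        show "(\<Prod>k\<in>{1..n} - {i}. c powr r k) \<le> (\<Prod>k\<in>{1..n} - {i}. q k powr r k)"
        proof (rule prod_mono)
          fix k assume "k \<in> {1..n} - {i}"
          hence k: "k \<in> {1..n}" by simp
          from r_range k have rk: "0 < r k" by blast
          show "0 \<le> c powr r k \<and> c powr r k \<le> q k powr r k"
            using qc[OF k] c rk by (auto intro: powr_mono2)
        qed
      qed (auto intro: prod_nonneg)
      finally have P2: "M powr r i * (\<Prod>k\<in>{1..n}-{i}. c powr r k) \<le> P" .
      have "(\<Prod>k\<in>{1..n}-{i}. c powr r k) = c powr (\<Sum>k\<in>{1..n}-{i}. r k)"
        using c by (simp add: powr_sum)
      also have "(\<Sum>k\<in>{1..n}-{i}. r k) = 1 - r i" using r_sum i by (simp add: sum_diff1)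
      also have "c powr (1 - r i) \<ge> c powr 1" using c ri by (intro powr_mono') auto
      finally have A: "c \<le> (\<Prod>k\<in>{1..n}-{i}. c powr r k)" using c by simp
      have "(1/c) powr (1 / r i) \<le> M" unfolding M_def using i by (intro member_le_sum) auto
      hence "((1/c) powr (1 / r i)) powr r i \<le> M powr r i" using ri c
        by (intro powr_mono2) auto
      hence B: "1/c \<le> M powr r i" using ri c by (simp add: powr_powr)
      have "1 = (1/c) * c" using c by simp
      also have "\<dots> \<le> M powr r i * (\<Prod>k\<in>{1..n}-{i}. c powr r k)"
        using A B c by (intro mult_mono) auto
      finally show ?thesis using P2 by linarith
    qed
    have "\<forall>k\<in>{1..n}. nrm q k \<le> \<phi> k + c"
    proof
      fix k assume k: "k \<in> {1..n}"
      have "nrm q k = q k / P" unfolding nrm_def P_def by simp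
      also have "\<dots> \<le> q k" proof -
        have "0 < q k" using qpos k by blast
        hence "q k / P \<le> q k / 1" using P1 by (intro divide_left_mono) auto
        thus ?thesis by simp
      qed
      finally show "nrm q k \<le> \<phi> k + c" using qhi[OF k] by linarith
    qed
    thus ?thesis using qQ by blast
  qed
  show ?thesis
    apply (rule exI[of _ "nrm ` Q"])
    using fin sub dom by simp
qed




lemma is_inf_unique: "is_inf S x \<Longrightarrow> is_inf S y \<Longrightarrow> x = (y::'a::order)"
  unfolding is_inf_def by (meson order.antisym)

lemma wgm_R_eq: "is_inf (wgm_set_R f r n) x \<Longrightarrow> wgm_R f r n = x"
  unfolding wgm_R_def using is_inf_unique by blast

definition aR :: "(nat \<Rightarrow> 'a::real_vector_lattice) \<Rightarrow> (nat \<Rightarrow> real) \<Rightarrow> nat \<Rightarrow> (nat \<Rightarrow> real) \<Rightarrow> 'a" where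
  "aR g r n \<theta> = (\<Sum>k\<in>{1..n}. (r k * \<theta> k) *\<^sub>R vabs (g k))"

lemma wgm_set_R_eq: "wgm_set_R g r n = aR g r n ` adm r n"
  unfolding wgm_set_R_def aR_def adm_def by auto

section \<open>Sublattices and linear maps\<close>

lemma subl_scale: "sublattice_R G \<Longrightarrow> x \<in> G \<Longrightarrow> c *\<^sub>R x \<in> G"
  unfolding sublattice_R_def by blast

lemma subl_add: "sublattice_R G \<Longrightarrow> x \<in> G \<Longrightarrow> y \<in> G \<Longrightarrow> x + y \<in> G"
  unfolding sublattice_R_def by blast

lemma subl_zero: "sublattice_R G \<Longrightarrow> 0 \<in> G"
  unfolding sublattice_R_def by blast

lemma subl_diff: "sublattice_R G \<Longrightarrow> x \<in> G \<Longrightarrow> y \<in> G \<Longrightarrow> x - y \<in> G"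
proof -
  assume a: "sublattice_R G" "x \<in> G" "y \<in> G"
  have "x - y = x + (-1::real) *\<^sub>R y" by simp
  thus ?thesis using a subl_add subl_scale by metis
qed

lemma subl_vabs: "sublattice_R G \<Longrightarrow> x \<in> G \<Longrightarrow> vabs x \<in> G"
  unfolding sublattice_R_def by blast

lemma subl_sum: "finite A \<Longrightarrow> sublattice_R G \<Longrightarrow> (\<forall>i\<in>A. g i \<in> G) \<Longrightarrow> (\<Sum>i\<in>A. g i) \<in> G"
proof (induction A rule: finite_induct)
  case empty thus ?case by (simp add: subl_zero)
next
  case (insert x F) thus ?case by (simp add: subl_add)
qed

lemma subl_sup0: "sublattice_R G \<Longrightarrow> x \<in> G \<Longrightarrow> sup x 0 \<in> G"
  unfolding sup0_eq by (intro subl_scale subl_add subl_vabs)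

lemma subl_inf: "sublattice_R G \<Longrightarrow> x \<in> G \<Longrightarrow> y \<in> G \<Longrightarrow> inf x y \<in> G"
  unfolding inf_eq by (intro subl_diff subl_sup0)

lemma lin_add: "linear_on_R G S \<Longrightarrow> x \<in> G \<Longrightarrow> y \<in> G \<Longrightarrow> S (x + y) = S x + S y"
  unfolding linear_on_R_def by blast

lemma lin_scale: "linear_on_R G S \<Longrightarrow> x \<in> G \<Longrightarrow> S (c *\<^sub>R x) = c *\<^sub>R S x"
  unfolding linear_on_R_def by blast

lemma lin_diff: "linear_on_R G S \<Longrightarrow> sublattice_R G \<Longrightarrow> x \<in> G \<Longrightarrow> y \<in> G \<Longrightarrow> S (x - y) = S x - S y"
proof -
  assume a: "linear_on_R G S" "sublattice_R G" "x \<in> G" "y \<in> G"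
  have "S x = S ((x - y) + y)" by simp
  also have "\<dots> = S (x - y) + S y" using a by (intro lin_add) (auto intro: subl_diff)
  finally show ?thesis by (simp add: algebra_simps)
qed

lemma lin_sum: "finite A \<Longrightarrow> linear_on_R G S \<Longrightarrow> sublattice_R G \<Longrightarrow> (\<forall>i\<in>A. g i \<in> G) \<Longrightarrow>
    S (\<Sum>i\<in>A. g i) = (\<Sum>i\<in>A. S (g i))"
proof (induction A rule: finite_induct)
  case empty
  have "S 0 = S (0 *\<^sub>R 0)" by simp
  also have "\<dots> = 0 *\<^sub>R S 0" using empty(1,2) subl_zero by (intro lin_scale) auto
  also have "\<dots> = 0" by simp
  finally show ?case by simp
next
  case (insert x F)
  have "S (\<Sum>i\<in>insert x F. g i) = S (g x + (\<Sum>i\<in>F. g i))" using insert(1,2) by simp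
  also have "\<dots> = S (g x) + S (\<Sum>i\<in>F. g i)"
    using insert by (intro lin_add subl_sum) auto
  also have "S (\<Sum>i\<in>F. g i) = (\<Sum>i\<in>F. S (g i))" using insert by auto
  finally show ?case using insert(1,2) by simp
qed

lemma hom_sup0:
  assumes "sublattice_R G" "linear_on_R G S" "vl_hom_on_R G S" "x \<in> G"
  shows "S (sup x 0) = sup (S x) 0"
proof -
  have vx: "vabs x \<in> G" using assms by (intro subl_vabs)
  have "S (sup x 0) = S ((1/2::real) *\<^sub>R (vabs x + x))" by (simp only: sup0_eq)
  also have "\<dots> = (1/2::real) *\<^sub>R S (vabs x + x)" using assms vx by (intro lin_scale subl_add) auto
  also have "S (vabs x + x) = S (vabs x) + S x" using assms vx by (intro lin_add) auto
  also have "S (vabs x) = vabs (S x)" using assms unfolding vl_hom_on_R_def by simp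
  finally show ?thesis by (simp only: sup0_eq[symmetric])
qed

lemma hom_inf:
  assumes "sublattice_R G" "linear_on_R G S" "vl_hom_on_R G S" "x \<in> G" "y \<in> G"
  shows "S (inf x y) = inf (S x) (S y)"
proof -
  have d: "x - y \<in> G" using assms by (intro subl_diff)
  have "S (inf x y) = S (x - sup (x - y) 0)" by (simp only: inf_eq)
  also have "\<dots> = S x - S (sup (x - y) 0)" using assms d by (intro lin_diff subl_sup0) auto
  also have "S (sup (x - y) 0) = sup (S (x - y)) 0" using assms d by (intro hom_sup0) auto
  also have "S (x - y) = S x - S y" using assms by (intro lin_diff) auto
  finally show ?thesis by (simp only: inf_eq[symmetric])
qed

lemma hom_mono:
  assumes "sublattice_R G" "linear_on_R G S" "vl_hom_on_R G S" "x \<in> G" "y \<in> G" "x \<le> y"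
  shows "S x \<le> S y"
proof -
  have "vabs (y - x) = y - x" using assms(6) by (simp add: vabs_of_nonneg)
  moreover have "y - x \<in> G" using assms by (intro subl_diff)
  ultimately have "S (y - x) = vabs (S (y - x))" using assms(3) unfolding vl_hom_on_R_def
    by metis
  hence "0 \<le> S (y - x)" using vabs_nonneg by metis
  moreover have "S (y - x) = S y - S x" using assms by (intro lin_diff) auto
  ultimately show ?thesis by simp
qed

lemma fin_inf_hom:
  assumes G: "sublattice_R G" "linear_on_R G S" "vl_hom_on_R G S"
  shows "finite A \<Longrightarrow> A \<noteq> {} \<Longrightarrow> A \<subseteq> G \<Longrightarrow>
     Inf_fin A \<in> G \<and> (\<forall>v. (\<forall>a\<in>A. v \<le> S a) \<longrightarrow> v \<le> S (Inf_fin A))"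
proof (induction A rule: finite_ne_induct)
  case (singleton x)
  thus ?case by simp
next
  case (insert x F)
  have FG: "F \<subseteq> G" and x: "x \<in> G" using insert(5) by auto
  have IH: "Inf_fin F \<in> G \<and> (\<forall>v. (\<forall>a\<in>F. v \<le> S a) \<longrightarrow> v \<le> S (Inf_fin F))"
    using insert(4)[OF FG] .
  have m: "Inf_fin F \<in> G" using IH by blast
  have eq: "Inf_fin (insert x F) = inf x (Inf_fin F)" using insert(1,2) by (rule Inf_fin.insert)
  show ?case unfolding eq
  proof (intro conjI allI impI)
    show "inf x (Inf_fin F) \<in> G" using m x G by (simp add: subl_inf)
    fix v assume v: "\<forall>a\<in>insert x F. v \<le> S a"
    have "v \<le> S (Inf_fin F)" using IH v by blast
    moreover have "v \<le> S x" using v by simp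
    ultimately show "v \<le> S (inf x (Inf_fin F))" using hom_inf[OF G x m] by simp
  qed
qed




lemma S_aR:
  assumes "linear_on_R G S" "sublattice_R G" "\<forall>k\<in>{1..n}. g k \<in> G"
    "\<forall>k\<in>{1..n}. vabs (h k) = S (vabs (g k))"
  shows "S (aR g r n \<theta>) = aR h r n \<theta> \<and> aR g r n \<theta> \<in> G"
proof
  have gk: "\<forall>k\<in>{1..n}. (r k * \<theta> k) *\<^sub>R vabs (g k) \<in> G"
    using assms(2,3) by (auto intro: subl_scale subl_vabs)
  show "aR g r n \<theta> \<in> G" unfolding aR_def using assms(2) gk by (intro subl_sum) auto
  have "S (aR g r n \<theta>) = (\<Sum>k\<in>{1..n}. S ((r k * \<theta> k) *\<^sub>R vabs (g k)))"
    unfolding aR_def using assms(1,2) gk by (intro lin_sum) auto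
  also have "\<dots> = (\<Sum>k\<in>{1..n}. (r k * \<theta> k) *\<^sub>R vabs (h k))"
  proof (rule sum.cong)
    fix k assume k: "k \<in> {1..n}"
    have "vabs (g k) \<in> G" using assms(2,3) k by (auto intro: subl_vabs)
    hence "S ((r k * \<theta> k) *\<^sub>R vabs (g k)) = (r k * \<theta> k) *\<^sub>R S (vabs (g k))"
      using assms(1) by (intro lin_scale)
    also have "S (vabs (g k)) = vabs (h k)" using assms(4) k by simp
    finally show "S ((r k * \<theta> k) *\<^sub>R vabs (g k)) = (r k * \<theta> k) *\<^sub>R vabs (h k)" .
  qed simp
  finally show "S (aR g r n \<theta>) = aR h r n \<theta>" unfolding aR_def .
qed

lemma lower_bound_R:
  assumes G: "sublattice_R G" "linear_on_R G S"
    and mono: "\<forall>x\<in>G. \<forall>y\<in>G. x \<le> y \<longrightarrow> S x \<le> S y"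
    and g: "\<forall>k\<in>{1..n}. g k \<in> G" and w: "is_inf (wgm_set_R g r n) w" "w \<in> G"
    and v: "is_inf (wgm_set_R h r n) v" and h: "\<forall>k\<in>{1..n}. vabs (h k) = S (vabs (g k))"
  shows "S w \<le> v"
proof -
  have "\<forall>s\<in>wgm_set_R h r n. S w \<le> s"
  proof
    fix s assume "s \<in> wgm_set_R h r n"
    then obtain \<theta> where th: "\<theta> \<in> adm r n" "s = aR h r n \<theta>" unfolding wgm_set_R_eq by auto
    have a: "S (aR g r n \<theta>) = aR h r n \<theta>" "aR g r n \<theta> \<in> G" using S_aR[OF G(2,1) g h] by auto
    have "w \<le> aR g r n \<theta>" using w(1) th(1) unfolding is_inf_def wgm_set_R_eq by auto
    hence "S w \<le> S (aR g r n \<theta>)" using mono w(2) a(2) by blast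
    thus "S w \<le> s" using a th by simp
  qed
  thus ?thesis using v unfolding is_inf_def by blast
qed

lemma one_adm: "(\<Sum>k\<in>{1..n}. r k) = 1 \<Longrightarrow> (\<lambda>_. 1) \<in> adm r n"
  unfolding adm_def by simp

lemma core_R:
  fixes S :: "'a::real_vector_lattice \<Rightarrow> 'b::archimedean_real_vector_lattice"
  assumes r_range: "\<forall>k\<in>{1..n}. 0 < r k \<and> r k < 1"
    and r_sum: "(\<Sum>k\<in>{1..n}. r k) = 1"
    and G: "sublattice_R G" "linear_on_R G S" "vl_hom_on_R G S"
    and g: "\<forall>k\<in>{1..n}. g k \<in> G" and w: "is_inf (wgm_set_R g r n) w" "w \<in> G"
    and v: "is_inf (wgm_set_R h r n) v" and h: "\<forall>k\<in>{1..n}. vabs (h k) = S (vabs (g k))"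
  shows "S w = v"
proof (rule order.antisym)
  have mono: "\<forall>x\<in>G. \<forall>y\<in>G. x \<le> y \<longrightarrow> S x \<le> S y" using G hom_mono by blast
  show "S w \<le> v" using lower_bound_R[OF G(1,2) mono g w v h] .
  define u where "u = (\<Sum>k\<in>{1..n}. vabs (g k))"
  have uG: "u \<in> G" unfolding u_def using G(1) g by (intro subl_sum) (auto intro: subl_vabs)
  have u0: "0 \<le> u" unfolding u_def by (intro sum_nonneg) (simp add: vabs_nonneg)
  have S0: "S 0 = 0" using lin_sum[of "{}" G S] G by simp
  have Su0: "0 \<le> S u" using mono uG u0 subl_zero[OF G(1)] S0 by metis
  have key: "v - S w \<le> c *\<^sub>R S u" if c: "0 < c" "c \<le> 1" for c
  proof -
    obtain \<Theta> where Th: "finite \<Theta>" "\<Theta> \<subseteq> adm r n"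
      "\<forall>\<phi>\<in>adm r n. \<exists>\<theta>\<in>\<Theta>. \<forall>k\<in>{1..n}. \<theta> k \<le> \<phi> k + c"
      using domination[OF r_range r_sum c] by blast
    have ne: "\<Theta> \<noteq> {}" using Th(3) one_adm[OF r_sum] by blast
    define A where "A = aR g r n ` \<Theta>"
    have A: "finite A" "A \<noteq> {}" "A \<subseteq> G"
      using Th ne S_aR[OF G(2,1) g h] unfolding A_def by auto
    define m where "m = Inf_fin A"
    have "\<forall>a\<in>A. v \<le> S a"
    proof
      fix a assume "a \<in> A"
      then obtain \<theta> where th: "\<theta> \<in> \<Theta>" "a = aR g r n \<theta>" unfolding A_def by auto
      have "S a = aR h r n \<theta>" using S_aR[OF G(2,1) g h] th by simp
      moreover have "aR h r n \<theta> \<in> wgm_set_R h r n" using th Th(2) unfolding wgm_set_R_eq by auto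
      ultimately show "v \<le> S a" using v unfolding is_inf_def by simp
    qed
    hence vm: "v \<le> S m" and mG: "m \<in> G" using fin_inf_hom[OF G A] unfolding m_def by auto
    have "\<forall>s\<in>wgm_set_R g r n. m - c *\<^sub>R u \<le> s"
    proof
      fix s assume "s \<in> wgm_set_R g r n"
      then obtain \<phi> where ph: "\<phi> \<in> adm r n" "s = aR g r n \<phi>" unfolding wgm_set_R_eq by auto
      obtain \<theta> where th: "\<theta> \<in> \<Theta>" "\<forall>k\<in>{1..n}. \<theta> k \<le> \<phi> k + c" using Th(3) ph(1) by blast
      have "m \<le> aR g r n \<theta>" unfolding m_def A_def using A th(1) unfolding A_def
        by (intro Inf_fin.coboundedI) auto
      also have "\<dots> \<le> (\<Sum>k\<in>{1..n}. (r k * \<phi> k) *\<^sub>R vabs (g k) + c *\<^sub>R vabs (g k))"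
        unfolding aR_def
      proof (rule sum_mono)
        fix k assume k: "k \<in> {1..n}"
        have rk: "0 < r k" "r k < 1" using r_range k by auto
        have "r k * \<theta> k \<le> r k * (\<phi> k + c)" using th(2) k rk by (intro mult_left_mono) auto
        also have "\<dots> \<le> r k * \<phi> k + c" using rk c by (simp add: algebra_simps mult_left_le_one_le)
        finally have "(r k * \<theta> k) *\<^sub>R vabs (g k) \<le> (r k * \<phi> k + c) *\<^sub>R vabs (g k)"
          by (intro scaleR_right_mono vabs_nonneg)
        thus "(r k * \<theta> k) *\<^sub>R vabs (g k) \<le> (r k * \<phi> k) *\<^sub>R vabs (g k) + c *\<^sub>R vabs (g k)"
          by (simp add: scaleR_add_left)
      qed
      also have "\<dots> = s + c *\<^sub>R u" unfolding ph(2) aR_def u_def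
        by (simp add: sum.distrib scaleR_sum_right)
      finally show "m - c *\<^sub>R u \<le> s" by (simp add: algebra_simps)
    qed
    hence "m - c *\<^sub>R u \<le> w" using w(1) unfolding is_inf_def by blast
    hence "m \<le> w + c *\<^sub>R u" by (simp add: algebra_simps)
    moreover have wu: "w + c *\<^sub>R u \<in> G" using G(1) w(2) uG by (intro subl_add subl_scale)
    ultimately have "S m \<le> S (w + c *\<^sub>R u)" using mono mG by blast
    also have "\<dots> = S w + c *\<^sub>R S u" using G(2) w(2) uG G(1)
      by (simp add: lin_add lin_scale subl_scale)
    finally show ?thesis using vm by (simp add: algebra_simps)
  qed
  define x where "x = sup (v - S w) 0"
  have x0: "0 \<le> x" unfolding x_def by simp
  have "real N *\<^sub>R x \<le> S u" for N :: nat
  proof -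
    have c: "0 < 1 / (real N + 1)" "1 / (real N + 1) \<le> 1" by (auto simp: field_simps)
    have "x \<le> (1 / (real N + 1)) *\<^sub>R S u" unfolding x_def
      using key[OF c] c Su0 by (simp add: scaleR_nonneg_nonneg)
    hence "(real N + 1) *\<^sub>R x \<le> (real N + 1) *\<^sub>R ((1 / (real N + 1)) *\<^sub>R S u)"
      by (intro scaleR_left_mono) auto
    hence "(real N + 1) *\<^sub>R x \<le> S u" by simp
    moreover have "real N *\<^sub>R x \<le> (real N + 1) *\<^sub>R x" using x0 by (intro scaleR_right_mono) auto
    ultimately show ?thesis by order
  qed
  hence "x = 0" using x0 archimedean by blast
  hence "v - S w \<le> 0" unfolding x_def by (metis sup_ge1)
  thus "v \<le> S w" by simp
qed




lemma linear_on_UNIV: "linear T \<Longrightarrow> linear_on_R UNIV T"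
  unfolding linear_on_R_def linear_iff by blast

lemma sublattice_UNIV: "sublattice_R UNIV"
  unfolding sublattice_R_def by simp

lemma get_inf_R:
  assumes "wgm_closed_R TYPE('a::archimedean_real_vector_lattice)"
    "\<forall>k\<in>{1..n}. 0 < r k \<and> r k < 1" "(\<Sum>k\<in>{1..n}. r k) = 1"
  shows "\<exists>x. is_inf (wgm_set_R (f :: nat \<Rightarrow> 'a) r n) x"
  using assms unfolding wgm_closed_R_def by blast

lemma amgm:
  assumes "\<forall>k\<in>{1..n}. 0 < r k \<and> r k < 1" "(\<Sum>k\<in>{1..n}. r k) = 1" "\<theta> \<in> adm r n"
  shows "1 \<le> (\<Sum>k\<in>{1..n}. r k * \<theta> k)"
proof -
  have pos: "\<forall>k\<in>{1..n}. 0 < \<theta> k" and P: "(\<Prod>k\<in>{1..n}. \<theta> k powr r k) = 1"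
    using assms(3) unfolding adm_def by auto
  have "0 = ln (\<Prod>k\<in>{1..n}. \<theta> k powr r k)" using P by simp
  also have "\<dots> = (\<Sum>k\<in>{1..n}. ln (\<theta> k powr r k))"
    using pos by (intro ln_prod) force+
  also have "\<dots> = (\<Sum>k\<in>{1..n}. r k * ln (\<theta> k))" by simp
  also have "\<dots> \<le> (\<Sum>k\<in>{1..n}. r k * (\<theta> k - 1))"
  proof (rule sum_mono)
    fix k assume k: "k \<in> {1..n}"
    have "0 < \<theta> k" "0 < r k" using pos assms(1) k by auto
    thus "r k * ln (\<theta> k) \<le> r k * (\<theta> k - 1)" by (intro mult_left_mono ln_le_minus_one) auto
  qed
  also have "\<dots> = (\<Sum>k\<in>{1..n}. r k * \<theta> k) - 1"
    using assms(2) by (simp add: algebra_simps sum_subtractf)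
  finally show ?thesis by simp
qed

lemma const_inf:
  assumes "\<forall>k\<in>{1..n}. 0 < r k \<and> r k < 1" "(\<Sum>k\<in>{1..n}. r k) = 1"
  shows "is_inf (wgm_set_R (\<lambda>_. x) r n) (vabs (x::'a::real_vector_lattice))"
proof -
  have e: "aR (\<lambda>_. x) r n \<theta> = (\<Sum>k\<in>{1..n}. r k * \<theta> k) *\<^sub>R vabs x" for \<theta>
    unfolding aR_def by (simp add: scaleR_sum_left)
  have lb: "vabs x \<le> aR (\<lambda>_. x) r n \<theta>" if "\<theta> \<in> adm r n" for \<theta>
  proof -
    have "1 *\<^sub>R vabs x \<le> (\<Sum>k\<in>{1..n}. r k * \<theta> k) *\<^sub>R vabs x"
      using amgm[OF assms that] by (intro scaleR_right_mono vabs_nonneg)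
    thus ?thesis using e by simp
  qed
  have mem: "vabs x \<in> wgm_set_R (\<lambda>_. x) r n"
    unfolding wgm_set_R_eq using e[of "\<lambda>_. 1"] one_adm[OF assms(2)] assms(2)
    by (metis (no_types, lifting) image_eqI mult.right_neutral scaleR_one sum.cong)
  show ?thesis unfolding is_inf_def using lb mem unfolding wgm_set_R_eq by auto
qed

lemma real_part:
  fixes n :: nat and r :: "nat \<Rightarrow> real"
  assumes r_range: "\<forall>k\<in>{1..n}. 0 < r k \<and> r k < 1"
    and r_sum: "(\<Sum>k\<in>{1..n}. r k) = 1"
  shows
   "(wgm_closed_R TYPE('a::archimedean_real_vector_lattice) \<and>
     wgm_closed_R TYPE('b::archimedean_real_vector_lattice) \<longrightarrow>
      (\<forall>T :: 'a \<Rightarrow> 'b. linear T \<and> positive_map_R T \<longrightarrow>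
         (\<forall>f. T (wgm_R f r n) \<le> wgm_R (\<lambda>k. T (vabs (f k))) r n))
    \<and> (\<forall>T :: 'a \<Rightarrow> 'b. linear T \<longrightarrow>
         (vl_hom_on_R UNIV T \<longleftrightarrow> (\<forall>f. T (wgm_R f r n) = wgm_R (\<lambda>k. T (f k)) r n)))
    \<and> (\<forall>(G :: 'a set) (T :: 'a \<Rightarrow> 'b) f.
         sublattice_R G \<and> linear_on_R G T \<and> vl_hom_on_R G T \<and>
         (\<forall>k\<in>{1..n}. f k \<in> G) \<and> wgm_R f r n \<in> G \<longrightarrow>
         T (wgm_R f r n) = wgm_R (\<lambda>k. T (f k)) r n))"
proof (intro impI conjI)
  assume cl: "wgm_closed_R TYPE('a) \<and> wgm_closed_R TYPE('b)"
  have clA: "\<exists>x. is_inf (wgm_set_R (f :: nat \<Rightarrow> 'a) r n) x" for f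
    using get_inf_R[of n r] cl r_range r_sum by blast
  have clB: "\<exists>x. is_inf (wgm_set_R (f :: nat \<Rightarrow> 'b) r n) x" for f
    using get_inf_R[of n r] cl r_range r_sum by blast
  have part3: "T (wgm_R f r n) = wgm_R (\<lambda>k. T (f k)) r n"
    if G: "sublattice_R G" "linear_on_R G T" "vl_hom_on_R G T" and f: "\<forall>k\<in>{1..n}. f k \<in> G"
      and wG: "wgm_R f r n \<in> G"
    for G and T :: "'a \<Rightarrow> 'b" and f
  proof -
    obtain w where w: "is_inf (wgm_set_R f r n) w" using clA by blast
    obtain v where v: "is_inf (wgm_set_R (\<lambda>k. T (f k)) r n) v" using clB by blast
    have we: "wgm_R f r n = w" using wgm_R_eq[OF w] .
    have ve: "wgm_R (\<lambda>k. T (f k)) r n = v" using wgm_R_eq[OF v] .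
    have h: "\<forall>k\<in>{1..n}. vabs (T (f k)) = T (vabs (f k))" using G(3) f unfolding vl_hom_on_R_def by auto
    show ?thesis unfolding we ve using core_R[OF r_range r_sum G f w wG[unfolded we] v h] .
  qed
  show "\<forall>(G :: 'a set) (T :: 'a \<Rightarrow> 'b) f. sublattice_R G \<and> linear_on_R G T \<and> vl_hom_on_R G T \<and>
         (\<forall>k\<in>{1..n}. f k \<in> G) \<and> wgm_R f r n \<in> G \<longrightarrow>
         T (wgm_R f r n) = wgm_R (\<lambda>k. T (f k)) r n"
    apply (intro allI impI)
    apply (elim conjE)
    apply (rule part3)
        apply assumption+
    done
  show "\<forall>T :: 'a \<Rightarrow> 'b. linear T \<longrightarrow> (vl_hom_on_R UNIV T \<longleftrightarrow> (\<forall>f. T (wgm_R f r n) = wgm_R (\<lambda>k. T (f k)) r n))"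
  proof (intro impI iffI allI)
    fix T :: "'a \<Rightarrow> 'b"
    assume lin: "linear T" and hom: "vl_hom_on_R UNIV T"
    fix f show "T (wgm_R f r n) = wgm_R (\<lambda>k. T (f k)) r n"
      using part3[OF sublattice_UNIV linear_on_UNIV[OF lin] hom] by simp
  next
    fix T :: "'a \<Rightarrow> 'b"
    assume lin: "linear T" and pr: "\<forall>f. T (wgm_R f r n) = wgm_R (\<lambda>k. T (f k)) r n"
    show "vl_hom_on_R UNIV T" unfolding vl_hom_on_R_def
    proof
      fix x :: 'a
      have "T (wgm_R (\<lambda>_. x) r n) = wgm_R (\<lambda>_. T x) r n" using pr by simp
      thus "vabs (T x) = T (vabs x)"
        using wgm_R_eq[OF const_inf[OF r_range r_sum]] by metis
    qed
  qed
  show "\<forall>T :: 'a \<Rightarrow> 'b. linear T \<and> positive_map_R T \<longrightarrow> (\<forall>f. T (wgm_R f r n) \<le> wgm_R (\<lambda>k. T (vabs (f k))) r n)"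
  proof (intro impI allI)
    fix T :: "'a \<Rightarrow> 'b"
    assume a: "linear T \<and> positive_map_R T"
    fix f :: "nat \<Rightarrow> 'a"
    have lin: "linear_on_R UNIV T" using a linear_on_UNIV by blast
    have mono: "\<forall>x\<in>UNIV. \<forall>y\<in>UNIV. x \<le> y \<longrightarrow> T x \<le> T y"
    proof (intro ballI impI)
      fix x y :: 'a assume "x \<le> y"
      hence "pos_R (y - x)" by (simp add: pos_R_iff)
      hence "0 \<le> T (y - x)" using a unfolding positive_map_R_def by (simp add: pos_R_iff)
      moreover have "T (y - x) = T y - T x" using a by (simp add: linear_diff)
      ultimately show "T x \<le> T y" by simp
    qed
    obtain w where w: "is_inf (wgm_set_R f r n) w" using clA by blast
    obtain v where v: "is_inf (wgm_set_R (\<lambda>k. T (vabs (f k))) r n) v" using clB by blast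
    have h: "\<forall>k\<in>{1..n}. vabs (T (vabs (f k))) = T (vabs (f k))"
    proof
      fix k
      have "pos_R (vabs (f k))" by (simp add: pos_R_iff vabs_nonneg)
      hence "pos_R (T (vabs (f k)))" using a unfolding positive_map_R_def by blast
      thus "vabs (T (vabs (f k))) = T (vabs (f k))" unfolding pos_R_def .
    qed
    show "T (wgm_R f r n) \<le> wgm_R (\<lambda>k. T (vabs (f k))) r n"
      unfolding wgm_R_eq[OF w] wgm_R_eq[OF v]
      using lower_bound_R[OF sublattice_UNIV lin mono _ w _ v h] by simp
  qed
qed




definition circ :: "'a::real_vector_lattice \<times> 'a \<Rightarrow> 'a set" where
  "circ z = {cos \<theta> *\<^sub>R fst z + sin \<theta> *\<^sub>R snd z | \<theta>. \<theta> \<in> {0..2*pi}}"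

lemma is_sup_unique: "is_sup S x \<Longrightarrow> is_sup S y \<Longrightarrow> x = (y::'a::order)"
  unfolding is_sup_def by (meson order.antisym)

lemma cabs_re_eq: "is_sup (circ z) x \<Longrightarrow> cabs_re z = x"
proof -
  assume a: "is_sup (circ z) x"
  have "cabs_re z = (THE s. is_sup (circ z) s)" by (simp add: cabs_re_def circ_def)
  also have "\<dots> = x" using a is_sup_unique by (intro the_equality) blast+
  finally show ?thesis .
qed

lemma cabs_is_sup:
  assumes "square_mean_closed TYPE('a::real_vector_lattice)"
  shows "is_sup (circ (z::'a \<times> 'a)) (cabs_re z)"
proof -
  have "\<exists>s. is_sup (circ z) s"
    using assms unfolding square_mean_closed_def circ_def by blast
  then obtain s where s: "is_sup (circ z) s" by blast
  thus ?thesis using cabs_re_eq[OF s] by simp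
qed

lemma circ_mem: "fst z \<in> circ z" "- fst z \<in> circ z"
proof -
  have "fst z = cos 0 *\<^sub>R fst z + sin 0 *\<^sub>R snd z" by simp
  thus "fst z \<in> circ z" unfolding circ_def by force
  have "- fst z = cos pi *\<^sub>R fst z + sin pi *\<^sub>R snd z" by simp
  moreover have "pi \<in> {0..2*pi}" by simp
  ultimately show "- fst z \<in> circ z" unfolding circ_def by blast
qed

lemma cabs_nonneg:
  assumes "square_mean_closed TYPE('a::real_vector_lattice)"
  shows "0 \<le> cabs_re (z::'a \<times> 'a)"
proof -
  have "fst z \<le> cabs_re z" "- fst z \<le> cabs_re z"
    using cabs_is_sup[OF assms, of z] circ_mem[of z] unfolding is_sup_def by auto
  hence "vabs (fst z) \<le> cabs_re z" unfolding vabs_def by simp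
  thus ?thesis using vabs_nonneg order_trans by blast
qed

lemma cabs_real: "cabs_re (x, 0) = vabs (x::'a::real_vector_lattice)"
proof (rule cabs_re_eq)
  show "is_sup (circ (x, 0)) (vabs x)" unfolding is_sup_def
  proof (intro conjI allI impI ballI)
    fix s assume "s \<in> circ (x, 0)"
    then obtain \<theta> where "s = cos \<theta> *\<^sub>R x" unfolding circ_def by auto
    thus "s \<le> vabs x" using scale_le_vabs[of "cos \<theta>" x] by simp
  next
    fix y assume "\<forall>s\<in>circ (x, 0). s \<le> y"
    hence "x \<le> y" "- x \<le> y" using circ_mem[of "(x,0)"] by auto
    thus "vabs x \<le> y" unfolding vabs_def by simp
  qed
qed

lemma pos_C_iff: "pos_C (z::'a::real_vector_lattice \<times> 'a) \<longleftrightarrow> snd z = 0 \<and> 0 \<le> fst z"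
proof (cases z)
  case (Pair a b)
  have "pos_C z \<longleftrightarrow> cabs_re (a, b) = a \<and> b = 0" unfolding pos_C_def cvabs_def Pair by auto
  also have "\<dots> \<longleftrightarrow> b = 0 \<and> 0 \<le> a"
  proof
    assume "cabs_re (a, b) = a \<and> b = 0"
    thus "b = 0 \<and> 0 \<le> a" using cabs_real[of a] pos_R_iff[of a] unfolding pos_R_def by auto
  next
    assume "b = 0 \<and> 0 \<le> a"
    thus "cabs_re (a, b) = a \<and> b = 0" using cabs_real[of a] vabs_of_nonneg[of a] by auto
  qed
  finally show ?thesis using Pair by simp
qed

lemma wgm_set_C_eq:
  assumes "square_mean_closed TYPE('a::real_vector_lattice)"
  shows "wgm_set_C (F :: nat \<Rightarrow> 'a \<times> 'a) r n = wgm_set_R (\<lambda>k. cabs_re (F k)) r n"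
proof -
  have "vabs (cabs_re (F k)) = cabs_re (F k)" for k
    using cabs_nonneg[OF assms] vabs_of_nonneg by blast
  thus ?thesis unfolding wgm_set_C_def wgm_set_R_def by simp
qed

lemma wgm_C_eq: "is_inf (wgm_set_C F r n) x \<Longrightarrow> wgm_C F r n = (x, 0)"
proof -
  assume a: "is_inf (wgm_set_C F r n) x"
  have "(THE x. is_inf (wgm_set_C F r n) x) = x"
    using a is_inf_unique by (intro the_equality) blast+
  thus ?thesis unfolding wgm_C_def by simp
qed

lemma cscale_real: "cscale (complex_of_real c) (x, y) = (c *\<^sub>R x, c *\<^sub>R y)"
  unfolding cscale_def by simp

lemma cscale_m1: "cscale (-1) z = - z"
  unfolding cscale_def by (simp add: prod_eq_iff)

lemma wgm_nonneg:
  assumes "is_inf (wgm_set_R g r n) w" "\<forall>k\<in>{1..n}. 0 < r k \<and> r k < 1"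
  shows "0 \<le> w"
proof -
  have "0 \<le> aR g r n \<theta>" if "\<theta> \<in> adm r n" for \<theta>
    unfolding aR_def
  proof (intro sum_nonneg scaleR_nonneg_nonneg vabs_nonneg)
    fix k assume k: "k \<in> {1..n}"
    have "0 < r k" "0 < \<theta> k" using assms(2) that k unfolding adm_def by auto
    thus "0 \<le> r k * \<theta> k" by simp
  qed
  hence "\<forall>s\<in>wgm_set_R g r n. 0 \<le> s" unfolding wgm_set_R_eq by blast
  thus ?thesis using assms unfolding is_inf_def by blast
qed




lemma complex_restr:
  fixes T :: "'a::real_vector_lattice \<times> 'a \<Rightarrow> 'b::real_vector_lattice \<times> 'b"
  assumes G: "sublattice_C G" and T: "clinear_on G T"
  shows "sublattice_R {x. (x, 0) \<in> G}" "linear_on_R {x. (x, 0) \<in> G} (\<lambda>x. fst (T (x, 0)))"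
proof -
  have z: "0 \<in> G" and ad: "\<And>x y. x \<in> G \<Longrightarrow> y \<in> G \<Longrightarrow> x + y \<in> G"
    and sc: "\<And>c x. x \<in> G \<Longrightarrow> cscale c x \<in> G" and ab: "\<And>x. x \<in> G \<Longrightarrow> cvabs x \<in> G"
    using G unfolding sublattice_C_def by blast+
  have Tad: "\<And>x y. x \<in> G \<Longrightarrow> y \<in> G \<Longrightarrow> T (x + y) = T x + T y"
    and Tsc: "\<And>c x. x \<in> G \<Longrightarrow> T (cscale c x) = cscale c (T x)"
    using T unfolding clinear_on_def by blast+
  show "sublattice_R {x. (x, 0) \<in> G}" unfolding sublattice_R_def
  proof (intro conjI ballI allI impI)
    show "0 \<in> {x. (x, 0) \<in> G}" using z by (simp add: zero_prod_def)
  next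
    fix x y assume "x \<in> {x. (x, 0) \<in> G}" "y \<in> {x. (x, 0) \<in> G}"
    thus "x + y \<in> {x. (x, 0) \<in> G}" using ad[of "(x,0)" "(y,0)"] by simp
  next
    fix c :: real and x assume "x \<in> {x. (x, 0) \<in> G}"
    thus "c *\<^sub>R x \<in> {x. (x, 0) \<in> G}" using sc[of "(x,0)" "complex_of_real c"] by (simp add: cscale_real)
  next
    fix x assume "x \<in> {x. (x, 0) \<in> G}"
    thus "vabs x \<in> {x. (x, 0) \<in> G}" using ab[of "(x,0)"] by (simp add: cvabs_def cabs_real)
  qed
  show "linear_on_R {x. (x, 0) \<in> G} (\<lambda>x. fst (T (x, 0)))" unfolding linear_on_R_def
  proof (intro conjI ballI allI)
    fix x y assume "x \<in> {x. (x, 0) \<in> G}" "y \<in> {x. (x, 0) \<in> G}"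
    thus "fst (T (x + y, 0)) = fst (T (x, 0)) + fst (T (y, 0))" using Tad[of "(x,0)" "(y,0)"] by simp
  next
    fix c :: real and x assume "x \<in> {x. (x, 0) \<in> G}"
    hence "T (cscale (complex_of_real c) (x, 0)) = cscale (complex_of_real c) (T (x, 0))" by (intro Tsc) simp
    thus "fst (T (c *\<^sub>R x, 0)) = c *\<^sub>R fst (T (x, 0))" by (simp add: cscale_real cscale_def)
  qed
qed

lemma complex_part3:
  fixes n :: nat and r :: "nat \<Rightarrow> real"
    and T :: "'a::archimedean_real_vector_lattice \<times> 'a \<Rightarrow> 'b::archimedean_real_vector_lattice \<times> 'b"
  assumes r_range: "\<forall>k\<in>{1..n}. 0 < r k \<and> r k < 1"
    and r_sum: "(\<Sum>k\<in>{1..n}. r k) = 1"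
    and sma: "square_mean_closed TYPE('a)" and smb: "square_mean_closed TYPE('b)"
    and w: "is_inf (wgm_set_C f r n) w" and v: "is_inf (wgm_set_C (\<lambda>k. T (f k)) r n) v"
    and G: "sublattice_C G" "clinear_on G T" "vl_hom_on_C G T"
    and f: "\<forall>k\<in>{1..n}. f k \<in> G" and wG: "wgm_C f r n \<in> G"
  shows "T (wgm_C f r n) = wgm_C (\<lambda>k. T (f k)) r n"
proof -
  define G' where "G' = {x. (x, 0) \<in> G}"
  define S where "S = (\<lambda>x. fst (T (x, 0)))"
  have G'1: "sublattice_R G'" and G'2: "linear_on_R G' S"
    using complex_restr[OF G(1,2)] unfolding G'_def S_def by auto
  have ad: "\<And>x y. x \<in> G \<Longrightarrow> y \<in> G \<Longrightarrow> x + y \<in> G"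
    and sc: "\<And>c x. x \<in> G \<Longrightarrow> cscale c x \<in> G"
    using G(1) unfolding sublattice_C_def by blast+
  have Tad: "\<And>x y. x \<in> G \<Longrightarrow> y \<in> G \<Longrightarrow> T (x + y) = T x + T y"
    and Tsc: "\<And>c x. x \<in> G \<Longrightarrow> T (cscale c x) = cscale c (T x)"
    using G(2) unfolding clinear_on_def by blast+
  have hom: "\<And>z. z \<in> G \<Longrightarrow> cvabs (T z) = T (cvabs z)" using G(3) unfolding vl_hom_on_C_def by blast
  have posreal: "snd (T (p, 0)) = 0" if "p \<in> G'" "0 \<le> p" for p
  proof -
    have "cvabs (p, 0) = (p, 0)" unfolding cvabs_def using cabs_real[of p] vabs_of_nonneg[OF that(2)] by simp
    hence "T (p, 0) = cvabs (T (p, 0))" using hom[of "(p,0)"] that(1) unfolding G'_def by simp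
    thus ?thesis unfolding cvabs_def by (metis snd_conv)
  qed
  have real: "snd (T (x, 0)) = 0" if x: "x \<in> G'" for x
  proof -
    define p where "p = sup x 0"
    define q where "q = sup (- x) 0"
    have mx: "- x \<in> G'" using subl_scale[OF G'1 x, of "-1"] by simp
    have pG: "p \<in> G'" "q \<in> G'" unfolding p_def q_def using G'1 x mx by (auto intro: subl_sup0)
    have xe: "(x, 0) = (p, 0) + cscale (-1) (q, 0)"
      using decomp[of x] unfolding p_def q_def cscale_m1 by simp
    have "T (x, 0) = T (p, 0) + cscale (-1) (T (q, 0))"
      unfolding xe using pG unfolding G'_def by (simp add: Tad sc Tsc)
    thus ?thesis using posreal[of p] posreal[of q] pG unfolding p_def q_def cscale_m1 by simp
  qed
  have Teq: "T (x, 0) = (S x, 0)" if "x \<in> G'" for x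
    using real[OF that] unfolding S_def by (metis prod.collapse)
  have G'3: "vl_hom_on_R G' S" unfolding vl_hom_on_R_def
  proof
    fix x assume x: "x \<in> G'"
    have "S (vabs x) = fst (T (cvabs (x, 0)))" unfolding S_def cvabs_def by (simp add: cabs_real)
    also have "\<dots> = fst (cvabs (T (x, 0)))" using hom[of "(x,0)"] x unfolding G'_def by simp
    also have "\<dots> = vabs (S x)" unfolding Teq[OF x] cvabs_def by (simp add: cabs_real)
    finally show "vabs (S x) = S (vabs x)" by simp
  qed
  define g where "g = (\<lambda>k. cabs_re (f k))"
  define h where "h = (\<lambda>k. cabs_re (T (f k)))"
  have gG: "\<forall>k\<in>{1..n}. g k \<in> G'"
  proof
    fix k assume "k \<in> {1..n}"
    hence "cvabs (f k) \<in> G" using f G(1) unfolding sublattice_C_def by blast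
    thus "g k \<in> G'" unfolding G'_def g_def cvabs_def by simp
  qed
  have w': "is_inf (wgm_set_R g r n) w" using w unfolding wgm_set_C_eq[OF sma] g_def .
  have v': "is_inf (wgm_set_R h r n) v" using v unfolding wgm_set_C_eq[OF smb] h_def .
  have wG': "w \<in> G'" using wG unfolding wgm_C_eq[OF w] G'_def by simp
  have hh: "\<forall>k\<in>{1..n}. vabs (h k) = S (vabs (g k))"
  proof
    fix k assume k: "k \<in> {1..n}"
    have "vabs (h k) = h k" unfolding h_def using cabs_nonneg[OF smb] vabs_of_nonneg by blast
    also have "\<dots> = fst (cvabs (T (f k)))" unfolding h_def cvabs_def by simp
    also have "\<dots> = fst (T (cvabs (f k)))" using hom f k by simp
    also have "\<dots> = S (g k)" unfolding S_def g_def cvabs_def by simp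
    also have "g k = vabs (g k)" unfolding g_def using cabs_nonneg[OF sma] vabs_of_nonneg by metis
    finally show "vabs (h k) = S (vabs (g k))" .
  qed
  have "S w = v" using core_R[OF r_range r_sum G'1 G'2 G'3 gG w' wG' v' hh] .
  thus ?thesis unfolding wgm_C_eq[OF w] wgm_C_eq[OF v] Teq[OF wG'] by simp
qed




lemma get_inf_C:
  assumes "wgm_closed_C TYPE('a::archimedean_real_vector_lattice)"
    "\<forall>k\<in>{1..n}. 0 < r k \<and> r k < 1" "(\<Sum>k\<in>{1..n}. r k) = 1"
  shows "\<exists>x. is_inf (wgm_set_C (f :: nat \<Rightarrow> 'a \<times> 'a) r n) x"
  using assms unfolding wgm_closed_C_def by blast

lemma wgm_C_const:
  assumes "square_mean_closed TYPE('a::real_vector_lattice)"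
    "\<forall>k\<in>{1..n}. 0 < r k \<and> r k < 1" "(\<Sum>k\<in>{1..n}. r k) = 1"
  shows "wgm_C (\<lambda>_. z :: 'a \<times> 'a) r n = cvabs z"
proof -
  have "is_inf (wgm_set_C (\<lambda>_. z) r n) (vabs (cabs_re z))"
    unfolding wgm_set_C_eq[OF assms(1)] using const_inf[OF assms(2,3)] .
  moreover have "vabs (cabs_re z) = cabs_re z" using cabs_nonneg[OF assms(1)] vabs_of_nonneg by blast
  ultimately show ?thesis unfolding cvabs_def using wgm_C_eq by metis
qed

lemma sublattice_C_UNIV: "sublattice_C UNIV"
  unfolding sublattice_C_def by simp

lemma complex_part:
  fixes n :: nat and r :: "nat \<Rightarrow> real"
  assumes r_range: "\<forall>k\<in>{1..n}. 0 < r k \<and> r k < 1"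
    and r_sum: "(\<Sum>k\<in>{1..n}. r k) = 1"
  shows
   "(square_mean_closed TYPE('a::archimedean_real_vector_lattice) \<and> square_mean_closed TYPE('b::archimedean_real_vector_lattice) \<and>
     wgm_closed_C TYPE('a) \<and> wgm_closed_C TYPE('b) \<longrightarrow>
      (\<forall>T :: 'a \<times> 'a \<Rightarrow> 'b \<times> 'b. clinear_on UNIV T \<and> positive_map_C T \<longrightarrow>
         (\<forall>f. le_C (T (wgm_C f r n)) (wgm_C (\<lambda>k. T (cvabs (f k))) r n)))
    \<and> (\<forall>T :: 'a \<times> 'a \<Rightarrow> 'b \<times> 'b. clinear_on UNIV T \<longrightarrow>
         (vl_hom_on_C UNIV T \<longleftrightarrow> (\<forall>f. T (wgm_C f r n) = wgm_C (\<lambda>k. T (f k)) r n)))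
    \<and> (\<forall>(G :: ('a \<times> 'a) set) (T :: 'a \<times> 'a \<Rightarrow> 'b \<times> 'b) f.
         sublattice_C G \<and> clinear_on G T \<and> vl_hom_on_C G T \<and>
         (\<forall>k\<in>{1..n}. f k \<in> G) \<and> wgm_C f r n \<in> G \<longrightarrow>
         T (wgm_C f r n) = wgm_C (\<lambda>k. T (f k)) r n))"
proof (intro impI conjI)
  assume cl: "square_mean_closed TYPE('a) \<and> square_mean_closed TYPE('b) \<and>
     wgm_closed_C TYPE('a) \<and> wgm_closed_C TYPE('b)"
  have sma: "square_mean_closed TYPE('a)" and smb: "square_mean_closed TYPE('b)" using cl by auto
  have clA: "\<exists>x. is_inf (wgm_set_C (f :: nat \<Rightarrow> 'a \<times> 'a) r n) x" for f
    using get_inf_C[of n r] cl r_range r_sum by blast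
  have clB: "\<exists>x. is_inf (wgm_set_C (f :: nat \<Rightarrow> 'b \<times> 'b) r n) x" for f
    using get_inf_C[of n r] cl r_range r_sum by blast
  have part3: "T (wgm_C f r n) = wgm_C (\<lambda>k. T (f k)) r n"
    if G: "sublattice_C G" "clinear_on G T" "vl_hom_on_C G T" and f: "\<forall>k\<in>{1..n}. f k \<in> G"
      and wG: "wgm_C f r n \<in> G"
    for G and T :: "'a \<times> 'a \<Rightarrow> 'b \<times> 'b" and f
  proof -
    obtain w where w: "is_inf (wgm_set_C f r n) w" using clA by blast
    obtain v where v: "is_inf (wgm_set_C (\<lambda>k. T (f k)) r n) v" using clB by blast
    show ?thesis using complex_part3[OF r_range r_sum sma smb w v G f wG] .
  qed
  show "\<forall>(G :: ('a \<times> 'a) set) (T :: 'a \<times> 'a \<Rightarrow> 'b \<times> 'b) f.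
         sublattice_C G \<and> clinear_on G T \<and> vl_hom_on_C G T \<and>
         (\<forall>k\<in>{1..n}. f k \<in> G) \<and> wgm_C f r n \<in> G \<longrightarrow>
         T (wgm_C f r n) = wgm_C (\<lambda>k. T (f k)) r n"
    apply (intro allI impI)
    apply (elim conjE)
    apply (rule part3)
        apply assumption+
    done
  show "\<forall>T :: 'a \<times> 'a \<Rightarrow> 'b \<times> 'b. clinear_on UNIV T \<longrightarrow>
         (vl_hom_on_C UNIV T \<longleftrightarrow> (\<forall>f. T (wgm_C f r n) = wgm_C (\<lambda>k. T (f k)) r n))"
  proof (intro allI impI iffI)
    fix T :: "'a \<times> 'a \<Rightarrow> 'b \<times> 'b" and f
    assume lin: "clinear_on UNIV T" and hom: "vl_hom_on_C UNIV T"
    show "T (wgm_C f r n) = wgm_C (\<lambda>k. T (f k)) r n"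
      using part3[OF sublattice_C_UNIV lin hom] by simp
  next
    fix T :: "'a \<times> 'a \<Rightarrow> 'b \<times> 'b"
    assume lin: "clinear_on UNIV T" and pr: "\<forall>f. T (wgm_C f r n) = wgm_C (\<lambda>k. T (f k)) r n"
    show "vl_hom_on_C UNIV T" unfolding vl_hom_on_C_def
    proof
      fix z :: "'a \<times> 'a"
      have "T (wgm_C (\<lambda>_. z) r n) = wgm_C (\<lambda>_. T z) r n" using pr by simp
      thus "cvabs (T z) = T (cvabs z)"
        using wgm_C_const[OF sma r_range r_sum, of z] wgm_C_const[OF smb r_range r_sum, of "T z"] by simp
    qed
  qed
  show "\<forall>T :: 'a \<times> 'a \<Rightarrow> 'b \<times> 'b. clinear_on UNIV T \<and> positive_map_C T \<longrightarrow>
         (\<forall>f. le_C (T (wgm_C f r n)) (wgm_C (\<lambda>k. T (cvabs (f k))) r n))"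
  proof (intro allI impI)
    fix T :: "'a \<times> 'a \<Rightarrow> 'b \<times> 'b" and f :: "nat \<Rightarrow> 'a \<times> 'a"
    assume a: "clinear_on UNIV T \<and> positive_map_C T"
    define S where "S = (\<lambda>x. fst (T (x, 0)))"
    have lin: "linear_on_R UNIV S"
      using complex_restr(2)[OF sublattice_C_UNIV, of T] a unfolding S_def by simp
    have pos: "T (p, 0) = (S p, 0) \<and> 0 \<le> S p" if "0 \<le> p" for p
    proof -
      have "pos_C (p, 0)" using that by (simp add: pos_C_iff)
      hence "pos_C (T (p, 0))" using a unfolding positive_map_C_def by blast
      hence "snd (T (p, 0)) = 0 \<and> 0 \<le> S p" unfolding pos_C_iff S_def by simp
      thus ?thesis unfolding S_def by (metis prod.collapse)
    qed
    have mono: "\<forall>x\<in>UNIV. \<forall>y\<in>UNIV. x \<le> y \<longrightarrow> S x \<le> S y"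
    proof (intro ballI impI)
      fix x y :: 'a assume "x \<le> y"
      hence "0 \<le> S (y - x)" using pos[of "y - x"] by simp
      moreover have "S (y - x) = S y - S x" using lin sublattice_UNIV by (intro lin_diff) auto
      ultimately show "S x \<le> S y" by simp
    qed
    define g where "g = (\<lambda>k. cabs_re (f k))"
    define h where "h = (\<lambda>k. cabs_re (T (cvabs (f k))))"
    obtain w where w: "is_inf (wgm_set_C f r n) w" using clA by blast
    obtain v where v: "is_inf (wgm_set_C (\<lambda>k. T (cvabs (f k))) r n) v" using clB by blast
    have w': "is_inf (wgm_set_R g r n) w" using w unfolding wgm_set_C_eq[OF sma] g_def .
    have v': "is_inf (wgm_set_R h r n) v" using v unfolding wgm_set_C_eq[OF smb] h_def .
    have g0: "0 \<le> g k" for k unfolding g_def using cabs_nonneg[OF sma] .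
    have hh: "\<forall>k\<in>{1..n}. vabs (h k) = S (vabs (g k))"
    proof
      fix k
      have e: "T (cvabs (f k)) = (S (g k), 0)" "0 \<le> S (g k)"
        using pos[OF g0[of k]] unfolding cvabs_def g_def by auto
      have vv: "vabs (S (g k)) = S (g k)" using vabs_of_nonneg[OF e(2)] .
      have "vabs (h k) = S (g k)" unfolding h_def e(1) cabs_real vv vv ..
      also have "g k = vabs (g k)" using g0 vabs_of_nonneg by metis
      finally show "vabs (h k) = S (vabs (g k))" .
    qed
    have Swv: "S w \<le> v"
      using lower_bound_R[OF sublattice_UNIV lin mono _ w' _ v' hh] by simp
    have w0: "0 \<le> w" using wgm_nonneg[OF w' r_range] .
    have "pos_C ((v, 0) - (S w, 0))" using Swv by (simp add: pos_C_iff)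
    thus "le_C (T (wgm_C f r n)) (wgm_C (\<lambda>k. T (cvabs (f k))) r n)"
      unfolding le_C_def wgm_C_eq[OF w] wgm_C_eq[OF v] using pos[OF w0] by simp
  qed
qed


theorem proposition4p1:
  fixes n :: nat and r :: "nat \<Rightarrow> real"
  assumes r_range: "\<forall>k\<in>{1..n}. 0 < r k \<and> r k < 1"
    and r_sum: "(\<Sum>k\<in>{1..n}. r k) = 1"
  shows
   "(wgm_closed_R TYPE('a::archimedean_real_vector_lattice) \<and>
     wgm_closed_R TYPE('b::archimedean_real_vector_lattice) \<longrightarrow>
      (\<forall>T :: 'a \<Rightarrow> 'b. linear T \<and> positive_map_R T \<longrightarrow>
         (\<forall>f. T (wgm_R f r n) \<le> wgm_R (\<lambda>k. T (vabs (f k))) r n))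
    \<and> (\<forall>T :: 'a \<Rightarrow> 'b. linear T \<longrightarrow>
         (vl_hom_on_R UNIV T \<longleftrightarrow> (\<forall>f. T (wgm_R f r n) = wgm_R (\<lambda>k. T (f k)) r n)))
    \<and> (\<forall>(G :: 'a set) (T :: 'a \<Rightarrow> 'b) f.
         sublattice_R G \<and> linear_on_R G T \<and> vl_hom_on_R G T \<and>
         (\<forall>k\<in>{1..n}. f k \<in> G) \<and> wgm_R f r n \<in> G \<longrightarrow>
         T (wgm_R f r n) = wgm_R (\<lambda>k. T (f k)) r n))
  \<and>
   (square_mean_closed TYPE('a) \<and> square_mean_closed TYPE('b) \<and>
     wgm_closed_C TYPE('a) \<and> wgm_closed_C TYPE('b) \<longrightarrow>
      (\<forall>T :: 'a \<times> 'a \<Rightarrow> 'b \<times> 'b. clinear_on UNIV T \<and> positive_map_C T \<longrightarrow>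
         (\<forall>f. le_C (T (wgm_C f r n)) (wgm_C (\<lambda>k. T (cvabs (f k))) r n)))
    \<and> (\<forall>T :: 'a \<times> 'a \<Rightarrow> 'b \<times> 'b. clinear_on UNIV T \<longrightarrow>
         (vl_hom_on_C UNIV T \<longleftrightarrow> (\<forall>f. T (wgm_C f r n) = wgm_C (\<lambda>k. T (f k)) r n)))
    \<and> (\<forall>(G :: ('a \<times> 'a) set) (T :: 'a \<times> 'a \<Rightarrow> 'b \<times> 'b) f.
         sublattice_C G \<and> clinear_on G T \<and> vl_hom_on_C G T \<and>
         (\<forall>k\<in>{1..n}. f k \<in> G) \<and> wgm_C f r n \<in> G \<longrightarrow>
         T (wgm_C f r n) = wgm_C (\<lambda>k. T (f k)) r n))"
  by (rule conjI[OF real_part[OF r_range r_sum] complex_part[OF r_range r_sum]])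

end
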